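(* Let $d\ge 2$ and let $\Lambda=\{\lambda_S:\emptyset\ne S\subseteq\mathbb{I}_d\}$ with all $\lambda_S>0$. If the survival copula of a random vector $\boldsymbol Z\in\mathbb{R}^d$ is the generalized Marshall–Olkin survival copula $\widehat C^{\mathrm{MO}(\Lambda)}$, then $\boldsymbol Z$ is mutually asymptotically independent.
   Context: Write $\mathbb{I}_d=\{1,\dots,d\}$. The generalized Marshall–Olkin survival copula with rate parameter $\Lambda$ is $\widehat C^{\mathrm{MO}(\Lambda)}(u_1,\dots,u_d)=\prod_{i=1}^d\prod_{S\subseteq\mathbb{I}_d,\,|S|=i}\ \min_{j\in S}u_j^{\eta_j^S}$ for $u_j\in[0,1]$, where $\eta_j^S=\lambda_S/\sum_{J\subseteq\mathbb{I}_d,\,J\ni j}\lambda_J$ for $j\in S$. For a survival copula $\widehat C$ and nonempty $S\subseteq\mathbb{I}_d$, $\widehat C_S$ denotes $\widehat C$ with the arguments outside $S$ set to $1$ (so $\widehat C_S(u)=u$ if $|S|=1$). A random vector with survival copula $\widehat C$ is mutually asymptotically independent if for every $S\subseteq\mathbb{I}_d$ with $|S|\ge2$ and every $\ell\in S$, $\lim_{u\downarrow0}\widehat C_S(u,\dots,u)/\widehat C_{S\setminus\{\ell\}}(u,\dots,u)=0$, with $0/0:=0$. *)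

theory Defs
  imports "HOL-Analysis.Analysis"
begin

definition MO_eta :: "nat \<Rightarrow> (nat set \<Rightarrow> real) \<Rightarrow> nat \<Rightarrow> nat set \<Rightarrow> real" where
  "MO_eta d lam j S = lam S / (\<Sum>J\<in>{J. J \<subseteq> {1..d} \<and> j \<in> J}. lam J)"

definition MO_survival_copula :: "nat \<Rightarrow> (nat set \<Rightarrow> real) \<Rightarrow> (nat \<Rightarrow> real) \<Rightarrow> real" where
  "MO_survival_copula d lam u =
     (\<Prod>i\<in>{1..d}. \<Prod>S\<in>{S. S \<subseteq> {1..d} \<and> card S = i}.
        Min ((\<lambda>j. u j powr MO_eta d lam j S) ` S))"

definition marginal_diag :: "((nat \<Rightarrow> real) \<Rightarrow> real) \<Rightarrow> nat set \<Rightarrow> real \<Rightarrow> real" where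
  "marginal_diag C S t = C (\<lambda>j. if j \<in> S then t else 1)"

text \<open>Mutual asymptotic independence of a random vector in R^d, expressed through its
  survival copula C (division by 0 yields 0 in HOL, matching the convention 0/0 := 0).\<close>
definition mutually_asympt_indep :: "nat \<Rightarrow> ((nat \<Rightarrow> real) \<Rightarrow> real) \<Rightarrow> bool" where
  "mutually_asympt_indep d C \<longleftrightarrow>
     (\<forall>S. S \<subseteq> {1..d} \<and> card S \<ge> 2 \<longrightarrow>
        (\<forall>l\<in>S. ((\<lambda>t. marginal_diag C S t / marginal_diag C (S - {l}) t) \<longlongrightarrow> 0) (at_right 0)))"

end

theory Submission
  imports Defs
begin

lemma prod_nonempty_subsets:
  "(\<Prod>i\<in>{1..d}. \<Prod>S\<in>{S. S \<subseteq> {1..(d::nat)} \<and> card S = i}. f S)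
   = (\<Prod>S\<in>{S. S \<subseteq> {1..d} \<and> S \<noteq> {}}. f S)"
proof -
  have fin: "\<forall>i\<in>{1..d}. finite {S. S \<subseteq> {1..d} \<and> card S = i}" by auto
  have U: "(\<Union>i\<in>{1..d}. {S. S \<subseteq> {1..d} \<and> card S = i}) = {S. S \<subseteq> {1..d} \<and> S \<noteq> {}}"
  proof (rule set_eqI, rule iffI)
    fix S assume "S \<in> (\<Union>i\<in>{1..d}. {S. S \<subseteq> {1..d} \<and> card S = i})"
    thus "S \<in> {S. S \<subseteq> {1..d} \<and> S \<noteq> {}}" by auto
  next
    fix S assume "S \<in> {S. S \<subseteq> {1..d} \<and> S \<noteq> {}}"
    hence S: "S \<subseteq> {1..d}" "S \<noteq> {}" by auto
    have "finite S" using S finite_subset by blast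
    hence "card S \<ge> 1" using S by (simp add: Suc_leI card_gt_0_iff)
    moreover have "card S \<le> d" using card_mono[OF _ S(1)] by simp
    ultimately show "S \<in> (\<Union>i\<in>{1..d}. {S. S \<subseteq> {1..d} \<and> card S = i})" using S by auto
  qed
  have "prod f (\<Union>i\<in>{1..d}. {S. S \<subseteq> {1..d} \<and> card S = i})
     = (\<Prod>i\<in>{1..d}. prod f {S. S \<subseteq> {1..d} \<and> card S = i})"
    by (rule prod.UNION_disjoint) auto
  thus ?thesis using U by simp
qed

lemma Min_img_le:
  assumes "finite T" "T \<noteq> {}" "\<And>j. j \<in> T \<Longrightarrow> f j \<le> g j"
  shows "Min (f ` T) \<le> Min (g ` T)"
proof -
  obtain j where j: "j \<in> T" "g j = Min (g ` T)"
  proof -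
    have "Min (g ` T) \<in> g ` T" using assms by (intro Min_in) auto
    thus ?thesis using that by auto
  qed
  have "Min (f ` T) \<le> f j" using j assms by (intro Min_le) auto
  also have "\<dots> \<le> g j" by (rule assms(3)[OF j(1)])
  also have "\<dots> = Min (g ` T)" using j(2) .
  finally show ?thesis .
qed

lemma Min_img_pos:
  assumes "finite T" "T \<noteq> {}" "\<And>j. j \<in> T \<Longrightarrow> f j > (0::real)"
  shows "Min (f ` T) > 0"
  using assms by (subst Min_gr_iff) auto

theorem mainTheorem3:
  fixes d :: nat and lam :: "nat set \<Rightarrow> real"
  assumes "d \<ge> 2"
    and "\<And>S. S \<subseteq> {1..d} \<Longrightarrow> S \<noteq> {} \<Longrightarrow> lam S > 0"
  shows "mutually_asympt_indep d (MO_survival_copula d lam)"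
  unfolding mutually_asympt_indep_def
proof (intro allI impI ballI)
  fix S l assume SS: "S \<subseteq> {1..d} \<and> 2 \<le> card S" and l: "l \<in> S"
  define P where "P = {S. S \<subseteq> {1..d} \<and> S \<noteq> {}}"
  have finP: "finite P" unfolding P_def by auto
  have lP: "{l} \<in> P" using SS l unfolding P_def by auto
  define u where "u = (\<lambda>(A::nat set) (t::real) (j::nat). if j \<in> A then t else (1::real))"
  define g where "g = (\<lambda>A t T. Min ((\<lambda>j. u A t j powr MO_eta d lam j T) ` T))"
  have C: "marginal_diag (MO_survival_copula d lam) A t = (\<Prod>T\<in>P. g A t T)" for A t
    unfolding marginal_diag_def MO_survival_copula_def g_def u_def P_def
    by (rule prod_nonempty_subsets)
  have eta_nn: "MO_eta d lam j T \<ge> 0" if "T \<in> P" "j \<in> T" for j T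
  proof -
    have "(\<Sum>J\<in>{J. J \<subseteq> {1..d} \<and> j \<in> J}. lam J) \<ge> 0"
      using assms(2) by (intro sum_nonneg) (metis (mono_tags, lifting) empty_iff less_imp_le mem_Collect_eq)
    moreover have "lam T > 0" using that assms(2) unfolding P_def by auto
    ultimately show ?thesis unfolding MO_eta_def by simp
  qed
  define e where "e = MO_eta d lam l {l}"
  have epos: "e > 0"
  proof -
    have fin: "finite {J. J \<subseteq> {1..d} \<and> l \<in> J}" by auto
    have "{l} \<in> {J. J \<subseteq> {1..d} \<and> l \<in> J}" using lP unfolding P_def by auto
    hence "(\<Sum>J\<in>{J. J \<subseteq> {1..d} \<and> l \<in> J}. lam J) > 0"
      using assms(2) fin by (intro sum_pos2[where i="{l}"]) (auto, metis empty_iff less_imp_le)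
    moreover have "lam {l} > 0" using assms(2) lP unfolding P_def by auto
    ultimately show ?thesis unfolding e_def MO_eta_def by simp
  qed
  let ?S' = "S - {l}"
  have key: "0 \<le> marginal_diag (MO_survival_copula d lam) S t / marginal_diag (MO_survival_copula d lam) ?S' t
     \<and> marginal_diag (MO_survival_copula d lam) S t / marginal_diag (MO_survival_copula d lam) ?S' t \<le> t powr e"
    if t: "0 < t" "t < 1" for t
  proof -
    have finT: "finite T" if "T \<in> P" for T using that unfolding P_def by (auto intro: finite_subset)
    have neT: "T \<noteq> {}" if "T \<in> P" for T using that unfolding P_def by auto
    have gpos: "g A t T > 0" if "T \<in> P" for A T
      unfolding g_def using that t
      by (intro Min_img_pos finT neT) (auto simp: u_def)
    have gle: "g S t T \<le> g ?S' t T" if "T \<in> P" for T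
      unfolding g_def
    proof (rule Min_img_le[OF finT[OF that] neT[OF that]])
      fix j assume j: "j \<in> T"
      have "u S t j \<le> u ?S' t j" using t by (auto simp: u_def)
      thus "u S t j powr MO_eta d lam j T \<le> u ?S' t j powr MO_eta d lam j T"
        using eta_nn[OF that j] t by (intro powr_mono2) (auto simp: u_def)
    qed
    have g1: "g S t {l} = t powr e" using l unfolding g_def u_def e_def by simp
    have g2: "g ?S' t {l} = 1" unfolding g_def u_def by simp
    have "(\<Prod>T\<in>P. g S t T) = g S t {l} * (\<Prod>T\<in>P - {{l}}. g S t T)"
      by (rule prod.remove[OF finP lP])
    also have "\<dots> \<le> t powr e * (\<Prod>T\<in>P - {{l}}. g ?S' t T)"
      unfolding g1 using gpos gle by (intro mult_left_mono prod_mono) (auto simp: less_imp_le)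
    also have "(\<Prod>T\<in>P - {{l}}. g ?S' t T) = (\<Prod>T\<in>P. g ?S' t T)"
      using prod.remove[OF finP lP, of "g ?S' t"] g2 by simp
    finally have le: "(\<Prod>T\<in>P. g S t T) \<le> t powr e * (\<Prod>T\<in>P. g ?S' t T)" .
    have p1: "(\<Prod>T\<in>P. g ?S' t T) > 0" using gpos by (intro prod_pos) auto
    have p2: "(\<Prod>T\<in>P. g S t T) > 0" using gpos by (intro prod_pos) auto
    show ?thesis unfolding C using le p1 p2 by (simp add: divide_le_eq mult.commute)
  qed
  have ev: "eventually (\<lambda>t. 0 < t \<and> t < (1::real)) (at_right 0)"
    by (simp add: eventually_at_right_field) (auto intro: exI[of _ 1])
  have lim: "((\<lambda>t. t powr e) \<longlongrightarrow> 0) (at_right 0)"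
    by (rule tendsto_zero_powrI[OF _ tendsto_const _ epos])
       (auto simp: tendsto_ident_at eventually_at_right_field intro: filterlim_at_right_to_0[THEN iffD2] exI[of _ 1]
        intro!: tendsto_eq_intros)
  show "((\<lambda>t. marginal_diag (MO_survival_copula d lam) S t /
             marginal_diag (MO_survival_copula d lam) ?S' t) \<longlongrightarrow> 0) (at_right 0)"
    apply (rule tendsto_sandwich[OF _ _ tendsto_const lim])
    using ev key by (auto elim!: eventually_mono)
qed

end
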